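(* Assume that for each $\ell\in I_{n-1}$ and every $j\in I_n\setminus I_\ell$, $\alpha_jY^{\{\ell\}}<1$ and every $y\in\gamma_\ell\cap\pi_1\cap\cdots\cap\pi_{\ell-1}$ satisfies $\alpha_jy\le 1$. Then $Y^{\{n\}}=(0,\dots,0,a_{nn}^{-1})^T$ is a global attractor.
   Context: Fix $n\ge 2$ and $I_m=\{1,\dots,m\}$. Consider the Lotka–Volterra system $x_i'=b_ix_i(1-\alpha_ix)$, $i\in I_n$, where $b_i>0$, $\alpha_i=(a_{i1},\dots,a_{in})$ with $a_{ii}>0$ and $a_{ij}\ge 0$. Solutions are considered in $\mathbb{R}^n_+$. An equilibrium $x^*\in\mathbb{R}^n_+$ is a global attractor if every solution with $x(0)\in\operatorname{int}\mathbb{R}^n_+$ satisfies $x(t)\to x^*$. $Y^{\{\ell\}}$ denotes the point with $\ell$th coordinate $a_{\ell\ell}^{-1}$ and all other coordinates $0$. $\pi_i=\{x\in\mathbb{R}^n_+:x_i=0\}$ (for $\ell=1$ the empty intersection of $\pi$'s is $\mathbb{R}^n_+$), $\gamma_i=\{x\in\mathbb{R}^n_+:\alpha_ix=1\}$. *)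

theory Defs
  imports "HOL-Analysis.Analysis"
begin

text \<open>Vectors in R^n are represented as functions nat => real, of which only the
  coordinates 1..n matter. The interaction matrix is a :: nat => nat => real,
  with alpha_i = (a i 1, ..., a i n).\<close>

definition alpha :: "nat \<Rightarrow> (nat \<Rightarrow> nat \<Rightarrow> real) \<Rightarrow> nat \<Rightarrow> (nat \<Rightarrow> real) \<Rightarrow> real" where
  "alpha n a i x = (\<Sum>k\<in>{1..n}. a i k * x k)"

definition Yax :: "(nat \<Rightarrow> nat \<Rightarrow> real) \<Rightarrow> nat \<Rightarrow> nat \<Rightarrow> real" where
  "Yax a l = (\<lambda>k. if k = l then 1 / a l l else 0)"

definition nonneg_orthant :: "nat \<Rightarrow> (nat \<Rightarrow> real) set" where
  "nonneg_orthant n = {y. \<forall>k\<in>{1..n}. 0 \<le> y k}"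

definition pos_orthant :: "nat \<Rightarrow> (nat \<Rightarrow> real) set" where
  "pos_orthant n = {y. \<forall>k\<in>{1..n}. 0 < y k}"

definition LV_solution :: "nat \<Rightarrow> (nat \<Rightarrow> real) \<Rightarrow> (nat \<Rightarrow> nat \<Rightarrow> real) \<Rightarrow> (real \<Rightarrow> nat \<Rightarrow> real) \<Rightarrow> bool" where
  "LV_solution n b a x \<longleftrightarrow>
     (\<forall>t\<ge>0. \<forall>i\<in>{1..n}.
        ((\<lambda>s. x s i) has_real_derivative (b i * x t i * (1 - alpha n a i (x t)))) (at t within {0..}))"

definition global_attractor :: "nat \<Rightarrow> (nat \<Rightarrow> real) \<Rightarrow> (nat \<Rightarrow> nat \<Rightarrow> real) \<Rightarrow> (nat \<Rightarrow> real) \<Rightarrow> bool" where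
  "global_attractor n b a xs \<longleftrightarrow>
     xs \<in> nonneg_orthant n \<and>
     (\<forall>x. LV_solution n b a x \<and> x 0 \<in> pos_orthant n \<longrightarrow>
        (\<forall>i\<in>{1..n}. ((\<lambda>t. x t i) \<longlongrightarrow> xs i) at_top))"

end

theory Submission imports Defs begin

lemma eventually_le_of_deriv:
  fixes f f' :: "real \<Rightarrow> real"
  assumes der: "eventually (\<lambda>t. (f has_real_derivative f' t) (at t)) at_top"
    and neg: "eventually (\<lambda>t. f t \<ge> c \<longrightarrow> f' t \<le> -\<kappa>) at_top"
    and k: "\<kappa> > 0"
  shows "eventually (\<lambda>t. f t \<le> c) at_top"
proof -
  obtain T where T: "\<And>t. t \<ge> T \<Longrightarrow> (f has_real_derivative f' t) (at t) \<and> (f t \<ge> c \<longrightarrow> f' t \<le> -\<kappa>)"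
    using eventually_conj[OF der neg] unfolding eventually_at_top_linorder by blast
  have ex: "\<exists>T1\<ge>T. f T1 \<le> c"
  proof (rule ccontr)
    assume "\<not> ?thesis"
    hence gt: "\<And>t. t \<ge> T \<Longrightarrow> f t > c" by force
    define L where "L = (f T - c)/\<kappa> + 1"
    have "(f T - c)/\<kappa> > 0" using gt[of T] k by simp
    hence Lpos: "L > 0" by (simp add: L_def)
    obtain z where z: "T < z" "z < T + L" "f (T+L) - f T = L * f' z"
      using MVT2[of T "T+L" f f'] T Lpos by force
    have "f' z \<le> -\<kappa>" using T[of z] gt[of z] z by auto
    hence "L * f' z \<le> L * (-\<kappa>)" using Lpos by (intro mult_left_mono) auto
    moreover have "L * \<kappa> = f T - c + \<kappa>" using k by (simp add: L_def field_simps)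
    ultimately have "f (T+L) \<le> c - \<kappa>" using z by linarith
    thus False using gt[of "T+L"] Lpos k by auto
  qed
  then obtain T1 where T1: "T1 \<ge> T" "f T1 \<le> c" by blast
  have "\<forall>t\<ge>T1. f t \<le> c"
  proof (intro allI impI, rule ccontr)
    fix t2 assume t2: "T1 \<le> t2" "\<not> f t2 \<le> c"
    define A where "A = {T1..t2} \<inter> f -` {..c}"
    have cont: "continuous_on {T1..t2} f"
    proof (intro continuous_at_imp_continuous_on ballI)
      fix x assume "x \<in> {T1..t2}"
      hence "(f has_real_derivative f' x) (at x)" using T T1 by auto
      thus "isCont f x" by (rule DERIV_isCont)
    qed
    have cl: "closed A" unfolding A_def by (rule continuous_closed_preimage[OF cont]) auto
    have TA: "T1 \<in> A" using T1 t2 by (auto simp: A_def)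
    have bdd: "bdd_above A" unfolding A_def by (rule bdd_aboveI[of _ t2]) auto
    define s0 where "s0 = Sup A"
    have s0A: "s0 \<in> A" unfolding s0_def using closed_contains_Sup[OF _ bdd cl] TA by blast
    have s0le: "s0 \<le> t2" "T1 \<le> s0" "f s0 \<le> c" using s0A by (auto simp: A_def)
    have s0lt: "s0 < t2" using s0le t2 by (cases "s0 = t2") auto
    have above: "\<And>s. s0 < s \<Longrightarrow> s \<le> t2 \<Longrightarrow> f s > c"
    proof (rule ccontr)
      fix s assume "s0 < s" "s \<le> t2" "\<not> f s > c"
      hence "s \<in> A" using s0le by (auto simp: A_def)
      hence "s \<le> s0" unfolding s0_def using bdd by (rule cSup_upper)
      thus False using \<open>s0 < s\<close> by simp
    qed
    obtain z where z: "s0 < z" "z < t2" "f t2 - f s0 = (t2 - s0) * f' z"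
      using MVT2[of s0 t2 f f'] T s0le T1 s0lt by force
    have "f' z \<le> -\<kappa>" using T[of z] above[of z] z s0le T1 by auto
    hence "(t2 - s0) * f' z < 0" using s0lt k by (simp add: mult_pos_neg)
    thus False using z s0le t2 by linarith
  qed
  thus ?thesis unfolding eventually_at_top_linorder by blast
qed

lemma alpha_delta:
  assumes "k \<in> {1..n}"
  shows "alpha n a j (\<lambda>i. if i = k then c else 0) = a j k * c"
  using assms by (simp add: alpha_def if_distrib cong: if_cong)

lemma alpha_add: "alpha n a j (\<lambda>i. f i + g i) = alpha n a j f + alpha n a j g"
  by (simp add: alpha_def distrib_left sum.distrib)

lemma hyp_H1:
  assumes adiag: "\<forall>i\<in>{1..n}. a i i > 0"
    and hyp: "\<forall>l\<in>{1..n-1}. \<forall>j\<in>{1..n} - {1..l}.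
               alpha n a j (Yax a l) < 1 \<and>
               (\<forall>y\<in>nonneg_orthant n. alpha n a l y = 1 \<and> (\<forall>i\<in>{1..<l}. y i = 0)
                   \<longrightarrow> alpha n a j y \<le> 1)"
    and l: "l \<in> {1..n-1}" and j: "j \<in> {l<..n}"
  shows "a j l < a l l"
proof -
  have jj: "j \<in> {1..n} - {1..l}" using j l by auto
  have lpos: "a l l > 0" using adiag l by auto
  have "alpha n a j (Yax a l) < 1" using hyp l jj by blast
  moreover have "alpha n a j (Yax a l) = a j l * (1 / a l l)"
    unfolding Yax_def using l by (intro alpha_delta) auto
  ultimately have "a j l / a l l < 1" by simp
  thus ?thesis using lpos by (simp add: divide_less_eq)
qed

lemma hyp_H2:
  assumes adiag: "\<forall>i\<in>{1..n}. a i i > 0"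
    and anonneg: "\<forall>i\<in>{1..n}. \<forall>j\<in>{1..n}. a i j \<ge> 0"
    and hyp: "\<forall>l\<in>{1..n-1}. \<forall>j\<in>{1..n} - {1..l}.
               alpha n a j (Yax a l) < 1 \<and>
               (\<forall>y\<in>nonneg_orthant n. alpha n a l y = 1 \<and> (\<forall>i\<in>{1..<l}. y i = 0)
                   \<longrightarrow> alpha n a j y \<le> 1)"
    and l: "l \<in> {1..n-1}" and j: "j \<in> {l<..n}" and k: "k \<in> {l..n}"
  shows "a j k \<le> a l k"
proof -
  have jj: "j \<in> {1..n} - {1..l}" using j l by auto
  have lpos: "a l l > 0" using adiag l by auto
  have Y: "\<And>y. y \<in> nonneg_orthant n \<Longrightarrow> alpha n a l y = 1 \<Longrightarrow> (\<forall>i\<in>{1..<l}. y i = 0) \<Longrightarrow> alpha n a j y \<le> 1"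
    using hyp l jj by blast
  have k1: "k \<in> {1..n}" using k l by auto
  have alk: "a l k \<ge> 0" using anonneg l k1 by auto
  have ajk: "a j k \<ge> 0" using anonneg j l k1 by auto
  have ajl: "a j l \<ge> 0" using anonneg j l by auto
  show ?thesis
  proof (cases "a l k > 0")
    case True
    define y where "y = (\<lambda>i::nat. if i = k then 1 / a l k else 0)"
    have "y \<in> nonneg_orthant n" using True by (auto simp: y_def nonneg_orthant_def)
    moreover have "alpha n a l y = 1" unfolding y_def using k1 True by (subst alpha_delta) auto
    moreover have "\<forall>i\<in>{1..<l}. y i = 0" using k by (auto simp: y_def)
    ultimately have "alpha n a j y \<le> 1" by (rule Y)
    moreover have "alpha n a j y = a j k / a l k" unfolding y_def using k1 by (subst alpha_delta) auto
    ultimately show ?thesis using True by (simp add: divide_le_eq)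
  next
    case False
    hence z: "a l k = 0" using alk by simp
    hence kl: "k \<noteq> l" using lpos by auto
    show ?thesis
    proof (rule ccontr)
      assume "\<not> a j k \<le> a l k"
      hence ajkp: "a j k > 0" using z by simp
      define y where "y = (\<lambda>i::nat. (if i = l then 1 / a l l else 0) + (if i = k then 2 / a j k else 0))"
      have ll: "l \<in> {1..n}" using l by auto
      have "y \<in> nonneg_orthant n" using lpos ajkp by (auto simp: y_def nonneg_orthant_def)
      moreover have "alpha n a l y = 1" unfolding y_def alpha_add using k1 ll lpos z
        by (simp add: alpha_delta)
      moreover have "\<forall>i\<in>{1..<l}. y i = 0" using k by (auto simp: y_def)
      ultimately have "alpha n a j y \<le> 1" by (rule Y)
      moreover have "alpha n a j y = a j l / a l l + 2" unfolding y_def alpha_add using k1 ll ajkp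
        by (simp add: alpha_delta)
      moreover have "a j l / a l l \<ge> 0" using ajl lpos by simp
      ultimately show False by linarith
    qed
  qed
qed

lemma split_sum:
  fixes f :: "nat \<Rightarrow> real"
  assumes "1 \<le> p" "p \<le> n"
  shows "(\<Sum>k\<in>{1..n}. f k) = (\<Sum>k\<in>{1..<p}. f k) + f p + (\<Sum>k\<in>{p<..n}. f k)"
proof -
  have e: "{1..n} = {1..<p} \<union> insert p {p<..n}" using assms by auto
  have "(\<Sum>k\<in>{1..n}. f k) = (\<Sum>k\<in>{1..<p}. f k) + (\<Sum>k\<in>insert p {p<..n}. f k)"
    unfolding e by (rule sum.union_disjoint) auto
  also have "(\<Sum>k\<in>insert p {p<..n}. f k) = f p + (\<Sum>k\<in>{p<..n}. f k)" by simp
  finally show ?thesis by simp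
qed

locale LVsys =
  fixes n :: nat and b :: "nat \<Rightarrow> real" and a :: "nat \<Rightarrow> nat \<Rightarrow> real"
    and x :: "real \<Rightarrow> nat \<Rightarrow> real"
  assumes n2: "n \<ge> 2"
    and bpos: "\<forall>i\<in>{1..n}. b i > 0"
    and adiag: "\<forall>i\<in>{1..n}. a i i > 0"
    and anonneg: "\<forall>i\<in>{1..n}. \<forall>j\<in>{1..n}. a i j \<ge> 0"
    and H1: "\<And>l j. l \<in> {1..n-1} \<Longrightarrow> j \<in> {l<..n} \<Longrightarrow> a j l < a l l"
    and H2: "\<And>l j k. l \<in> {1..n-1} \<Longrightarrow> j \<in> {l<..n} \<Longrightarrow> k \<in> {l..n} \<Longrightarrow> a j k \<le> a l k"
    and sol: "LV_solution n b a x"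
    and init: "x 0 \<in> pos_orthant n"
begin

lemma deriv:
  assumes "0 < t" "i \<in> {1..n}"
  shows "((\<lambda>s. x s i) has_real_derivative (b i * x t i * (1 - alpha n a i (x t)))) (at t)"
proof -
  have "((\<lambda>s. x s i) has_real_derivative (b i * x t i * (1 - alpha n a i (x t)))) (at t within {0..})"
    using sol assms unfolding LV_solution_def by auto
  moreover have "at t within {0..} = at t"
    using assms by (intro at_within_interior) auto
  ultimately show ?thesis by simp
qed

lemma cont: "i \<in> {1..n} \<Longrightarrow> continuous_on {0..} (\<lambda>s. x s i)"
  unfolding continuous_on_eq_continuous_within
  using sol unfolding LV_solution_def by (blast intro: DERIV_continuous)

lemma cont_alpha: "continuous_on {0..} (\<lambda>s. alpha n a i (x s))"
  unfolding alpha_def by (auto intro!: continuous_intros cont)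

lemma pos:
  assumes t: "0 \<le> t" and i: "i \<in> {1..n}"
  shows "x t i > 0"
proof (rule ccontr)
  assume neg: "\<not> x t i > 0"
  have x0: "x 0 i > 0" using init i by (auto simp: pos_orthant_def)
  define A where "A = {0..t} \<inter> (\<lambda>s. x s i) -` {..0}"
  have cl: "closed A" unfolding A_def
    by (rule continuous_closed_preimage) (auto intro: continuous_on_subset[OF cont[OF i]])
  have tA: "t \<in> A" using neg t by (auto simp: A_def)
  have bdd: "bdd_below A" unfolding A_def by (rule bdd_belowI[of _ 0]) auto
  define t0 where "t0 = Inf A"
  have t0A: "t0 \<in> A" unfolding t0_def using closed_contains_Inf[OF _ bdd cl] tA by blast
  hence t0le: "0 \<le> t0" "x t0 i \<le> 0" by (auto simp: A_def)
  have t0pos: "0 < t0" using t0le x0 by (cases "t0 = 0") auto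
  have before: "\<And>s. 0 \<le> s \<Longrightarrow> s < t0 \<Longrightarrow> x s i > 0"
  proof (rule ccontr)
    fix s assume s: "0 \<le> s" "s < t0" "\<not> x s i > 0"
    have "t0 \<le> t" using t0A by (auto simp: A_def)
    hence "s \<in> A" using s by (auto simp: A_def)
    hence "t0 \<le> s" unfolding t0_def using bdd by (rule cInf_lower)
    thus False using s by simp
  qed
  define g where "g = (\<lambda>s. b i * (1 - alpha n a i (x s)))"
  have gc: "continuous_on {0..t0} g" unfolding g_def
    by (intro continuous_intros continuous_on_subset[OF cont_alpha]) auto
  obtain smin where smin: "\<forall>y\<in>{0..t0}. g smin \<le> g y"
    using continuous_attains_inf[OF compact_Icc _ gc] t0le by auto
  define M where "M = max 0 (- g smin)"
  define q where "q = (\<lambda>s. x s i * exp (M * s))"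
  have qc: "continuous_on {0..t0} q" unfolding q_def
    by (intro continuous_intros continuous_on_subset[OF cont[OF i]]) auto
  have qd: "\<And>z. 0 < z \<Longrightarrow> (q has_real_derivative (x z i * exp (M * z) * (g z + M))) (at z)"
  proof -
    fix z :: real assume z: "0 < z"
    have "(q has_real_derivative (b i * x z i * (1 - alpha n a i (x z)) * exp (M * z) + x z i * (exp (M * z) * M))) (at z)"
      unfolding q_def by (auto intro!: derivative_eq_intros deriv z i)
    thus "(q has_real_derivative (x z i * exp (M * z) * (g z + M))) (at z)"
      by (simp add: g_def algebra_simps)
  qed
  obtain l z where lz: "0 < z" "z < t0" "DERIV q z :> l" "q t0 - q 0 = (t0 - 0) * l"
    using MVT[OF t0pos qc] qd real_differentiable_def by force
  have l: "l = x z i * exp (M * z) * (g z + M)" using DERIV_unique[OF lz(3) qd[OF lz(1)]] .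
  have "g smin \<le> g z" using smin lz by auto
  hence "g z + M \<ge> 0" by (auto simp: M_def)
  moreover have "x z i > 0" using before lz by auto
  ultimately have "l \<ge> 0" using l by simp
  hence "t0 * l \<ge> 0" using t0pos by simp
  hence "q t0 \<ge> q 0" using lz by simp
  moreover have "q 0 > 0" using x0 by (simp add: q_def)
  ultimately have "x t0 i > 0" unfolding q_def by (smt (verit) exp_gt_zero mult_nonpos_nonneg)
  thus False using t0le by simp
qed

lemma alpha_ge:
  assumes "0 \<le> t" "i \<in> {1..n}"
  shows "alpha n a i (x t) \<ge> a i i * x t i"
  unfolding alpha_def
proof (rule member_le_sum[of i "{1..n}" "\<lambda>k. a i k * x t k"])
  fix k assume k: "k \<in> {1..n} - {i}"
  hence "a i k \<ge> 0" "x t k > 0" using anonneg assms pos[of t k] by auto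
  thus "0 \<le> a i k * x t k" by simp
qed (use assms in auto)

lemma bounded_i:
  assumes i: "i \<in> {1..n}"
  shows "eventually (\<lambda>t. x t i \<le> 2 / a i i) at_top"
proof (rule eventually_le_of_deriv[where f' = "\<lambda>t. b i * x t i * (1 - alpha n a i (x t))" and \<kappa> = "2 * b i / a i i"])
  have ai: "a i i > 0" and bi: "b i > 0" using adiag bpos i by auto
  show "eventually (\<lambda>t. ((\<lambda>t. x t i) has_real_derivative b i * x t i * (1 - alpha n a i (x t))) (at t)) at_top"
    unfolding eventually_at_top_linorder by (rule exI[of _ 1]) (auto intro: deriv i)
  show "0 < 2 * b i / a i i" using ai bi by simp
  show "eventually (\<lambda>t. 2 / a i i \<le> x t i \<longrightarrow> b i * x t i * (1 - alpha n a i (x t)) \<le> - (2 * b i / a i i)) at_top"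
    unfolding eventually_at_top_linorder
  proof (intro exI[of _ 1] allI impI)
    fix t :: real assume t: "1 \<le> t" and xb: "2 / a i i \<le> x t i"
    have "alpha n a i (x t) \<ge> a i i * x t i" using alpha_ge t i by auto
    moreover have "a i i * x t i \<ge> 2" using xb ai by (simp add: divide_le_eq mult.commute)
    ultimately have h1: "1 - alpha n a i (x t) \<le> -1" by linarith
    have xp: "x t i > 0" using pos t i by auto
    have "b i * x t i * (1 - alpha n a i (x t)) \<le> b i * x t i * (-1)"
      using h1 bi xp by (intro mult_left_mono) auto
    also have "\<dots> \<le> - (b i * (2 / a i i))" using mult_left_mono[OF xb, of "b i"] bi by simp
    finally show "b i * x t i * (1 - alpha n a i (x t)) \<le> - (2 * b i / a i i)" by (simp add: mult.commute)
  qed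
qed

lemma bounded: "\<exists>B>0. eventually (\<lambda>t. \<forall>i\<in>{1..n}. x t i \<le> B) at_top"
proof -
  define B where "B = (\<Sum>i\<in>{1..n}. 2 / a i i)"
  have le: "\<And>i. i \<in> {1..n} \<Longrightarrow> 2 / a i i \<le> B"
    unfolding B_def by (rule member_le_sum) (use adiag in \<open>auto intro: less_imp_le\<close>)
  have "1 \<in> {1..n}" using n2 by auto
  hence "2 / a 1 1 > 0" using adiag by auto
  hence Bp: "B > 0" using le[of 1] \<open>1 \<in> {1..n}\<close> by linarith
  have "eventually (\<lambda>t. \<forall>i\<in>{1..n}. x t i \<le> 2 / a i i) at_top"
    by (rule eventually_ball_finite) (auto intro: bounded_i)
  hence "eventually (\<lambda>t. \<forall>i\<in>{1..n}. x t i \<le> B) at_top"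
    by eventually_elim (use le in \<open>fastforce\<close>)
  thus ?thesis using Bp by blast
qed

lemma Slow: "\<exists>s>0. eventually (\<lambda>t. (\<Sum>k\<in>{1..n}. x t k) \<ge> s) at_top"
proof -
  define Amax where "Amax = (\<Sum>i\<in>{1..n}. \<Sum>k\<in>{1..n}. a i k)"
  have Ale: "\<And>i k. i \<in> {1..n} \<Longrightarrow> k \<in> {1..n} \<Longrightarrow> a i k \<le> Amax"
  proof -
    fix i k assume ik: "i \<in> {1..n}" "k \<in> {1..n}"
    have "a i k \<le> (\<Sum>k\<in>{1..n}. a i k)" by (rule member_le_sum) (use ik anonneg in auto)
    also have "\<dots> \<le> Amax" unfolding Amax_def
      by (rule member_le_sum[of i "{1..n}" "\<lambda>i. \<Sum>k\<in>{1..n}. a i k"]) (use ik anonneg in \<open>auto intro: sum_nonneg\<close>)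
    finally show "a i k \<le> Amax" .
  qed
  have A0: "Amax \<ge> 0" unfolding Amax_def using anonneg by (auto intro: sum_nonneg)
  define bmin where "bmin = Min (b ` {1..n})"
  have bmin_le: "\<And>k. k \<in> {1..n} \<Longrightarrow> bmin \<le> b k" unfolding bmin_def by auto
  have bmin_pos: "bmin > 0" unfolding bmin_def using bpos n2 by (subst Min_gr_iff) auto
  define s where "s = 1 / (2 * (Amax + 1))"
  have spos: "s > 0" using A0 by (simp add: s_def)
  have As: "Amax * s \<le> 1/2" using A0 by (simp add: s_def field_simps)
  define S where "S = (\<lambda>t. \<Sum>k\<in>{1..n}. x t k)"
  define S' where "S' = (\<lambda>t. \<Sum>k\<in>{1..n}. b k * x t k * (1 - alpha n a k (x t)))"
  have Spos: "\<And>t. 0 \<le> t \<Longrightarrow> S t > 0" unfolding S_def using n2 pos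
    by (intro sum_pos) auto
  have dS: "\<And>t. 0 < t \<Longrightarrow> (S has_real_derivative S' t) (at t)"
    unfolding S_def S'_def by (rule DERIV_sum) (auto intro: deriv)
  have ev: "eventually (\<lambda>t. - ln (S t) \<le> - ln s) at_top"
  proof (rule eventually_le_of_deriv[where f' = "\<lambda>t. - (S' t / S t)" and \<kappa> = "bmin / 2"])
    show "eventually (\<lambda>t. ((\<lambda>t. - ln (S t)) has_real_derivative - (S' t / S t)) (at t)) at_top"
      unfolding eventually_at_top_linorder
    proof (intro exI[of _ 1] allI impI)
      fix t :: real assume t: "1 \<le> t"
      have "((\<lambda>t. - ln (S t)) has_real_derivative - (S' t * inverse (S t))) (at t)"
        using t Spos[of t] by (auto intro!: derivative_eq_intros dS simp: divide_inverse)
      thus "((\<lambda>t. - ln (S t)) has_real_derivative - (S' t / S t)) (at t)" by (simp add: divide_inverse)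
    qed
    show "0 < bmin / 2" using bmin_pos by simp
    show "eventually (\<lambda>t. - ln s \<le> - ln (S t) \<longrightarrow> - (S' t / S t) \<le> - (bmin / 2)) at_top"
      unfolding eventually_at_top_linorder
    proof (intro exI[of _ 1] allI impI)
      fix t :: real assume t: "1 \<le> t" and h: "- ln s \<le> - ln (S t)"
      have St: "S t > 0" using Spos t by auto
      have Sle: "S t \<le> s" using h St spos by simp
      have al: "\<And>k. k \<in> {1..n} \<Longrightarrow> alpha n a k (x t) \<le> 1/2"
      proof -
        fix k assume k: "k \<in> {1..n}"
        have "alpha n a k (x t) \<le> (\<Sum>j\<in>{1..n}. Amax * x t j)" unfolding alpha_def
          by (rule sum_mono, rule mult_right_mono) (use Ale k pos t in \<open>auto intro: less_imp_le\<close>)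
        also have "\<dots> = Amax * S t" by (simp add: S_def sum_distrib_left)
        also have "\<dots> \<le> Amax * s" using Sle A0 by (intro mult_left_mono) auto
        finally show "alpha n a k (x t) \<le> 1/2" using As by simp
      qed
      have "S' t \<ge> (\<Sum>k\<in>{1..n}. bmin * x t k * (1/2))" unfolding S'_def
      proof (rule sum_mono)
        fix k assume k: "k \<in> {1..n}"
        have xk: "x t k > 0" using pos t k by auto
        have "bmin * x t k * (1/2) \<le> b k * x t k * (1/2)" using bmin_le[OF k] xk by simp
        also have "\<dots> \<le> b k * x t k * (1 - alpha n a k (x t))"
          using al[OF k] bpos k xk by (intro mult_left_mono) (auto intro: mult_nonneg_nonneg less_imp_le)
        finally show "bmin * x t k * (1/2) \<le> b k * x t k * (1 - alpha n a k (x t))" .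
      qed
      also have "(\<Sum>k\<in>{1..n}. bmin * x t k * (1/2)) = bmin / 2 * S t"
        by (simp add: S_def sum_distrib_left sum_divide_distrib algebra_simps)
      finally have "S' t / S t \<ge> bmin / 2" using St by (simp add: le_divide_eq)
      thus "- (S' t / S t) \<le> - (bmin / 2)" by simp
    qed
  qed
  have "eventually (\<lambda>t. S t \<ge> s) at_top"
    using ev eventually_ge_at_top[of 0]
  proof eventually_elim
    case (elim t)
    thus ?case using Spos[of t] spos by simp
  qed
  thus ?thesis using spos unfolding S_def by blast
qed

lemma step:
  assumes p: "1 \<le> p" "p < n" and IH: "\<forall>k\<in>{1..<p}. ((\<lambda>t. x t k) \<longlongrightarrow> 0) at_top"
  shows "((\<lambda>t. x t p) \<longlongrightarrow> 0) at_top \<and>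
         (\<exists>r>0. eventually (\<lambda>t. (\<Sum>j\<in>{p<..n}. exp (b p / b j * ln (x t j))) \<ge> r) at_top)"
proof -
  define J where "J = {p<..n}"
  have Jfin: "finite J" and Jne: "J \<noteq> {}" and Jsub: "J \<subseteq> {1..n}" using p by (auto simp: J_def)
  have cardJ: "card J \<le> n" unfolding J_def by simp
  have pn: "p \<in> {1..n}" and pn1: "p \<in> {1..n-1}" using p by auto
  have bp: "b p > 0" using bpos pn by auto
  define \<theta> where "\<theta> = (\<lambda>j. b p / b j)"
  have \<theta>pos: "\<And>j. j \<in> J \<Longrightarrow> \<theta> j > 0" using bpos Jsub bp by (auto simp: \<theta>_def)
  have \<theta>b: "\<And>j. j \<in> J \<Longrightarrow> \<theta> j * b j = b p" using bpos Jsub by (force simp: \<theta>_def)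
  define E where "E = (\<lambda>t j. exp (\<theta> j * ln (x t j)))"
  define R where "R = (\<lambda>t. \<Sum>j\<in>J. E t j)"
  define g where "g = (\<lambda>t. ln (R t) - ln (x t p))"
  define al where "al = (\<lambda>t i. alpha n a i (x t))"
  define R' where "R' = (\<lambda>t. \<Sum>j\<in>J. E t j * (b p * (1 - al t j)))"
  define gd where "gd = (\<lambda>t. R' t / R t - b p * (1 - al t p))"
  define c0 where "c0 = Min ((\<lambda>j. a p p - a j p) ` J)"
  have c0le: "\<And>j. j \<in> J \<Longrightarrow> c0 \<le> a p p - a j p" unfolding c0_def using Jfin by auto
  have c0pos: "c0 > 0" unfolding c0_def using Jfin Jne H1[OF pn1] by (subst Min_gr_iff) (auto simp: J_def)
  define M0 where "M0 = (\<Sum>j\<in>{1..n}. \<Sum>k\<in>{1..n}. \<bar>a j k - a p k\<bar>)"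
  have M0le: "\<And>j k. j \<in> {1..n} \<Longrightarrow> k \<in> {1..n} \<Longrightarrow> \<bar>a j k - a p k\<bar> \<le> M0"
  proof -
    fix j k assume jk: "j \<in> {1..n}" "k \<in> {1..n}"
    have "\<bar>a j k - a p k\<bar> \<le> (\<Sum>k\<in>{1..n}. \<bar>a j k - a p k\<bar>)"
      by (rule member_le_sum[of k "{1..n}" "\<lambda>k. \<bar>a j k - a p k\<bar>"]) (use jk in auto)
    also have "\<dots> \<le> M0" unfolding M0_def
      by (rule member_le_sum[of j "{1..n}" "\<lambda>j. \<Sum>k\<in>{1..n}. \<bar>a j k - a p k\<bar>"]) (use jk in \<open>auto intro: sum_nonneg\<close>)
    finally show "\<bar>a j k - a p k\<bar> \<le> M0" .
  qed
  define \<epsilon> where "\<epsilon> = (\<lambda>t. M0 * (\<Sum>k\<in>{1..<p}. x t k))"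
  have sum0: "((\<lambda>t. \<Sum>k\<in>{1..<p}. x t k) \<longlongrightarrow> 0) at_top"
    using tendsto_sum[of "{1..<p}" "\<lambda>k t. x t k" "\<lambda>k. 0" at_top] IH by simp
  have eps0: "(\<epsilon> \<longlongrightarrow> 0) at_top" unfolding \<epsilon>_def using tendsto_mult[OF tendsto_const sum0, of M0] by simp
  have KI: "\<And>t j. 0 \<le> t \<Longrightarrow> j \<in> J \<Longrightarrow> al t p - al t j \<ge> c0 * x t p - \<epsilon> t"
  proof -
    fix t :: real and j assume t: "0 \<le> t" and j: "j \<in> J"
    have j1: "j \<in> {1..n}" using j Jsub by auto
    define h where "h = (\<lambda>k. (a p k - a j k) * x t k)"
    have "al t p - al t j = (\<Sum>k\<in>{1..n}. h k)"
      unfolding al_def alpha_def h_def by (simp add: sum_subtractf left_diff_distrib)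
    also have "\<dots> = (\<Sum>k\<in>{1..<p}. h k) + h p + (\<Sum>k\<in>J. h k)"
      unfolding J_def using p by (intro split_sum) auto
    finally have eq: "al t p - al t j = (\<Sum>k\<in>{1..<p}. h k) + h p + (\<Sum>k\<in>J. h k)" .
    have s1: "(\<Sum>k\<in>{1..<p}. h k) \<ge> - \<epsilon> t"
    proof -
      have "(\<Sum>k\<in>{1..<p}. h k) \<ge> (\<Sum>k\<in>{1..<p}. - (M0 * x t k))"
      proof (rule sum_mono)
        fix k assume k: "k \<in> {1..<p}"
        have k1: "k \<in> {1..n}" using k p by auto
        have xk: "x t k > 0" using pos t k1 by auto
        have "- (M0 * x t k) \<le> - (\<bar>a j k - a p k\<bar> * x t k)"
          using M0le[OF j1 k1] xk by (simp add: mult_right_mono)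
        also have "\<dots> \<le> (a p k - a j k) * x t k" using xk
          by (smt (verit, best) abs_ge_self abs_minus_commute mult_minus_left mult_right_mono)
        finally show "- (M0 * x t k) \<le> h k" by (simp add: h_def)
      qed
      also have "(\<Sum>k\<in>{1..<p}. - (M0 * x t k)) = - \<epsilon> t" by (simp add: \<epsilon>_def sum_distrib_left sum_negf)
      finally show ?thesis .
    qed
    have s2: "h p \<ge> c0 * x t p" unfolding h_def using c0le[OF j] pos[OF t pn] by (simp add: mult_right_mono)
    have s3: "(\<Sum>k\<in>J. h k) \<ge> 0"
    proof (rule sum_nonneg)
      fix k assume k: "k \<in> J"
      have "a j k \<le> a p k" using H2[OF pn1, of j k] j k by (auto simp: J_def)
      moreover have "x t k > 0" using pos t k Jsub by auto
      ultimately show "0 \<le> h k" by (simp add: h_def)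
    qed
    show "al t p - al t j \<ge> c0 * x t p - \<epsilon> t" using eq s1 s2 s3 by linarith
  qed
  have Epos: "\<And>t j. E t j > 0" by (simp add: E_def)
  have Rpos: "\<And>t. R t > 0" unfolding R_def using Jfin Jne Epos by (intro sum_pos) auto
  have dE: "\<And>t j. 0 < t \<Longrightarrow> j \<in> J \<Longrightarrow> ((\<lambda>s. E s j) has_real_derivative E t j * (b p * (1 - al t j))) (at t)"
  proof -
    fix t :: real and j assume t: "0 < t" and j: "j \<in> J"
    have j1: "j \<in> {1..n}" using j Jsub by auto
    have xj: "x t j > 0" using pos j1 t by auto
    have "((\<lambda>s. E s j) has_real_derivative E t j * (\<theta> j * (b j * x t j * (1 - al t j) / x t j))) (at t)"
      unfolding E_def al_def using xj
      by (auto intro!: derivative_eq_intros deriv[OF t j1] simp: divide_inverse)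
    moreover have "\<theta> j * (b j * x t j * (1 - al t j) / x t j) = (\<theta> j * b j) * (1 - al t j)"
      using xj by simp
    moreover note \<theta>b[OF j]
    ultimately show "((\<lambda>s. E s j) has_real_derivative E t j * (b p * (1 - al t j))) (at t)" by simp
  qed
  have dR: "\<And>t. 0 < t \<Longrightarrow> (R has_real_derivative R' t) (at t)"
    unfolding R_def R'_def by (rule DERIV_sum) (auto intro: dE)
  have dg: "\<And>t. 0 < t \<Longrightarrow> (g has_real_derivative gd t) (at t)"
  proof -
    fix t :: real assume t: "0 < t"
    have xp: "x t p > 0" using pos pn t by auto
    have "(g has_real_derivative R' t / R t - b p * x t p * (1 - al t p) / x t p) (at t)"
      unfolding g_def al_def using xp Rpos[of t]
      by (auto intro!: derivative_eq_intros dR[OF t] deriv[OF t pn] simp: divide_inverse)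
    moreover have "b p * x t p * (1 - al t p) / x t p = b p * (1 - al t p)" using xp by simp
    ultimately show "(g has_real_derivative gd t) (at t)" by (simp add: gd_def)
  qed
  have GI: "\<And>t. 0 < t \<Longrightarrow> gd t \<ge> b p * (c0 * x t p - \<epsilon> t)"
  proof -
    fix t :: real assume t: "0 < t"
    have "R' t - b p * (1 - al t p) * R t = (\<Sum>j\<in>J. E t j * (b p * (al t p - al t j)))"
      unfolding R'_def R_def by (simp add: sum_distrib_left sum_subtractf[symmetric] algebra_simps)
    also have "\<dots> \<ge> (\<Sum>j\<in>J. E t j * (b p * (c0 * x t p - \<epsilon> t)))"
    proof (rule sum_mono)
      fix j assume j: "j \<in> J"
      have "b p * (c0 * x t p - \<epsilon> t) \<le> b p * (al t p - al t j)"
        using KI[of t j] t j bp by (intro mult_left_mono) (auto intro: less_imp_le)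
      thus "E t j * (b p * (c0 * x t p - \<epsilon> t)) \<le> E t j * (b p * (al t p - al t j))"
        using Epos[of t j] mult_left_mono by (simp add: less_imp_le)
    qed
    also have "(\<Sum>j\<in>J. E t j * (b p * (c0 * x t p - \<epsilon> t))) = R t * (b p * (c0 * x t p - \<epsilon> t))"
      unfolding R_def by (simp add: sum_distrib_right)
    finally have "R t * (b p * (c0 * x t p - \<epsilon> t)) \<le> R' t - b p * (1 - al t p) * R t" .
    hence "b p * (c0 * x t p - \<epsilon> t) \<le> (R' t - b p * (1 - al t p) * R t) / R t"
      using Rpos[of t] by (simp add: le_divide_eq mult.commute)
    also have "\<dots> = gd t" unfolding gd_def using Rpos[of t] by (simp add: diff_divide_distrib)
    finally show "gd t \<ge> b p * (c0 * x t p - \<epsilon> t)" .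
  qed
  obtain B where Bp: "B > 0" and evB: "eventually (\<lambda>t. \<forall>i\<in>{1..n}. x t i \<le> B) at_top"
    using bounded by blast
  obtain s where sp: "s > 0" and evS: "eventually (\<lambda>t. (\<Sum>k\<in>{1..n}. x t k) \<ge> s) at_top"
    using Slow by blast
  have evsum: "eventually (\<lambda>t. (\<Sum>k\<in>{1..<p}. x t k) < s/4) at_top"
    using order_tendstoD(2)[OF sum0, of "s/4"] sp by simp
  have eveps: "eventually (\<lambda>t. \<epsilon> t < c0 * s / 4) at_top"
    using order_tendstoD(2)[OF eps0, of "c0 * s / 4"] sp c0pos by simp
  have ev1: "eventually (\<lambda>t. (1::real) \<le> t) at_top" by (rule eventually_ge_at_top)
  have dmg: "eventually (\<lambda>t. ((\<lambda>t. - g t) has_real_derivative - gd t) (at t)) at_top"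
    using ev1 by eventually_elim (rule DERIV_minus, rule dg, simp)
  define q where "q = s / (4 * real n)"
  have qp: "q > 0" using sp n2 by (simp add: q_def)
  define \<delta>0 where "\<delta>0 = Min ((\<lambda>j. exp (\<theta> j * ln q)) ` J)"
  have \<delta>0le: "\<And>j. j \<in> J \<Longrightarrow> \<delta>0 \<le> exp (\<theta> j * ln q)" unfolding \<delta>0_def using Jfin by (auto intro!: Min_le)
  have \<delta>0p: "\<delta>0 > 0" unfolding \<delta>0_def using Jfin Jne by (subst Min_gr_iff) auto
  have ER: "\<And>t j. j \<in> J \<Longrightarrow> E t j \<le> R t" unfolding R_def
    by (rule member_le_sum) (use Jfin Epos in \<open>auto intro: less_imp_le\<close>)
  have small: "\<And>t. 0 \<le> t \<Longrightarrow> R t < \<delta>0 \<Longrightarrow> (\<Sum>j\<in>J. x t j) \<le> s/4"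
  proof -
    fix t :: real assume t: "0 \<le> t" and Rs: "R t < \<delta>0"
    have "(\<Sum>j\<in>J. x t j) \<le> (\<Sum>j\<in>J. q)"
    proof (rule sum_mono)
      fix j assume j: "j \<in> J"
      have xj: "x t j > 0" using pos t j Jsub by auto
      have "exp (\<theta> j * ln (x t j)) < exp (\<theta> j * ln q)" using ER[OF j, of t] Rs \<delta>0le[OF j]
        unfolding E_def by linarith
      hence "\<theta> j * ln (x t j) < \<theta> j * ln q" by simp
      hence "ln (x t j) < ln q" using \<theta>pos[OF j] by simp
      thus "x t j \<le> q" using xj qp by simp
    qed
    also have "\<dots> = real (card J) * q" by simp
    also have "\<dots> \<le> real n * q" using cardJ qp by (intro mult_right_mono) auto
    also have "\<dots> = s / 4" using n2 by (simp add: q_def)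
    finally show "(\<Sum>j\<in>J. x t j) \<le> s/4" .
  qed
  have big: "\<And>t. 0 \<le> t \<Longrightarrow> R t < \<delta>0 \<Longrightarrow> (\<Sum>k\<in>{1..n}. x t k) \<ge> s \<Longrightarrow>
      (\<Sum>k\<in>{1..<p}. x t k) < s/4 \<Longrightarrow> x t p \<ge> s/2"
  proof -
    fix t :: real assume t: "0 \<le> t" "R t < \<delta>0" "(\<Sum>k\<in>{1..n}. x t k) \<ge> s" "(\<Sum>k\<in>{1..<p}. x t k) < s/4"
    have "(\<Sum>k\<in>{1..n}. x t k) = (\<Sum>k\<in>{1..<p}. x t k) + x t p + (\<Sum>k\<in>J. x t k)"
      unfolding J_def using p by (intro split_sum) auto
    thus "x t p \<ge> s/2" using small[OF t(1,2)] t by linarith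
  qed
  define C0 where "C0 = ln B - ln \<delta>0 + 1"
  have ev_a: "eventually (\<lambda>t. - g t \<le> C0) at_top"
  proof (rule eventually_le_of_deriv[OF dmg, where \<kappa> = "b p * c0 * s / 4"])
    show "0 < b p * c0 * s / 4" using bp c0pos sp by simp
    show "eventually (\<lambda>t. C0 \<le> - g t \<longrightarrow> - gd t \<le> - (b p * c0 * s / 4)) at_top"
      using ev1 evB evS evsum eveps
    proof eventually_elim
      case (elim t)
      show ?case
      proof
        assume h: "C0 \<le> - g t"
        have t0: "0 < t" using elim by simp
        have xp: "0 < x t p" "x t p \<le> B" using pos pn elim by auto
        have "ln (R t) \<le> ln (x t p) - C0" using h by (simp add: g_def)
        also have "\<dots> \<le> ln B - C0" using xp by simp
        also have "\<dots> < ln \<delta>0" by (simp add: C0_def)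
        finally have "R t < \<delta>0" using Rpos[of t] \<delta>0p by simp
        hence xb: "x t p \<ge> s/2" using big[of t] elim by auto
        have "b p * c0 * s / 4 = b p * (c0 * (s/2) - c0 * s / 4)" by (simp add: algebra_simps)
        also have "\<dots> \<le> b p * (c0 * x t p - \<epsilon> t)"
        proof -
          have "c0 * (s/2) \<le> c0 * x t p" using mult_left_mono[OF xb, of c0] c0pos by simp
          hence "c0 * (s/2) - c0 * s / 4 \<le> c0 * x t p - \<epsilon> t" using elim by linarith
          thus ?thesis using bp by (simp add: mult_left_mono)
        qed
        also have "\<dots> \<le> gd t" using GI t0 by auto
        finally show "- gd t \<le> - (b p * c0 * s / 4)" by simp
      qed
    qed
  qed
  define r where "r = min \<delta>0 (s/2 * exp (- C0))"
  have rp: "r > 0" using \<delta>0p sp by (simp add: r_def)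
  have ev_r: "eventually (\<lambda>t. R t \<ge> r) at_top"
    using ev_a ev1 evS evsum
  proof eventually_elim
    case (elim t)
    show ?case
    proof (cases "R t < \<delta>0")
      case False thus ?thesis by (simp add: r_def)
    next
      case True
      hence xb: "x t p \<ge> s/2" using big[of t] elim by auto
      have xp: "0 < x t p" using pos pn elim by auto
      have "ln (x t p) - C0 \<le> ln (R t)" using elim by (simp add: g_def)
      hence "exp (ln (x t p) - C0) \<le> R t" using Rpos[of t] by (metis exp_le_cancel_iff exp_ln)
      hence "x t p * exp (- C0) \<le> R t" using xp by (simp add: exp_diff exp_minus divide_inverse)
      moreover have "s/2 * exp (- C0) \<le> x t p * exp (- C0)" using xb by (intro mult_right_mono) auto
      moreover have "r \<le> s/2 * exp (- C0)" by (simp add: r_def)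
      ultimately show ?thesis by linarith
    qed
  qed
  define Rb where "Rb = (\<Sum>j\<in>J. exp (\<theta> j * ln B))"
  have Rbp: "Rb > 0" unfolding Rb_def using Jfin Jne by (intro sum_pos) auto
  have evRb: "eventually (\<lambda>t. R t \<le> Rb) at_top"
    using evB ev1
  proof eventually_elim
    case (elim t)
    show ?case unfolding R_def Rb_def E_def
    proof (rule sum_mono)
      fix j assume j: "j \<in> J"
      have "0 < x t j" "x t j \<le> B" using pos elim j Jsub by auto
      hence "ln (x t j) \<le> ln B" by simp
      hence "\<theta> j * ln (x t j) \<le> \<theta> j * ln B" using \<theta>pos[OF j] by (simp add: mult_left_mono)
      thus "exp (\<theta> j * ln (x t j)) \<le> exp (\<theta> j * ln B)" by simp
    qed
  qed
  have evL: "\<And>L. eventually (\<lambda>t. - g t \<le> - L) at_top"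
  proof -
    fix L :: real
    define w where "w = c0 * r * exp (- L)"
    have wp: "w > 0" using c0pos rp by (simp add: w_def)
    have evw: "eventually (\<lambda>t. \<epsilon> t < w / 2) at_top"
      using order_tendstoD(2)[OF eps0, of "w / 2"] wp by simp
    show "eventually (\<lambda>t. - g t \<le> - L) at_top"
    proof (rule eventually_le_of_deriv[OF dmg, where \<kappa> = "b p * w / 2"])
      show "0 < b p * w / 2" using bp wp by simp
      show "eventually (\<lambda>t. - L \<le> - g t \<longrightarrow> - gd t \<le> - (b p * w / 2)) at_top"
        using ev1 ev_r evw
      proof eventually_elim
        case (elim t)
        show ?case
        proof
          assume h: "- L \<le> - g t"
          have t0: "0 < t" using elim by simp
          have xp: "0 < x t p" using pos pn elim by auto
          have "ln (R t) - L \<le> ln (x t p)" using h by (simp add: g_def)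
          hence "exp (ln (R t) - L) \<le> x t p" using xp by (metis exp_le_cancel_iff exp_ln)
          hence "R t * exp (- L) \<le> x t p" using Rpos[of t] by (simp add: exp_diff exp_minus divide_inverse)
          moreover have "r * exp (- L) \<le> R t * exp (- L)" using elim by simp
          ultimately have xb: "r * exp (- L) \<le> x t p" by linarith
          have "b p * w / 2 = b p * (c0 * (r * exp (- L)) - w / 2)" by (simp add: w_def algebra_simps)
          also have "\<dots> \<le> b p * (c0 * x t p - \<epsilon> t)"
          proof -
            have "c0 * (r * exp (- L)) \<le> c0 * x t p" using mult_left_mono[OF xb, of c0] c0pos by simp
            hence "c0 * (r * exp (- L)) - w / 2 \<le> c0 * x t p - \<epsilon> t" using elim by linarith
            thus ?thesis using bp by (simp add: mult_left_mono)
          qed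
          also have "\<dots> \<le> gd t" using GI t0 by auto
          finally show "- gd t \<le> - (b p * w / 2)" by simp
        qed
      qed
    qed
  qed
  have lim: "((\<lambda>t. x t p) \<longlongrightarrow> 0) at_top"
  proof (rule order_tendstoI)
    fix c :: real assume c: "c < 0"
    show "eventually (\<lambda>t. c < x t p) at_top"
      using eventually_ge_at_top[of 0]
    proof eventually_elim
      case (elim t)
      thus ?case using pos[OF elim pn] c by linarith
    qed
  next
    fix e :: real assume ep: "0 < e"
    define L where "L = ln Rb - ln e + 1"
    show "eventually (\<lambda>t. x t p < e) at_top"
      using evL[of L] evRb ev1
    proof eventually_elim
      case (elim t)
      have xp: "0 < x t p" using pos pn elim by auto
      have "ln (x t p) = ln (R t) - g t" by (simp add: g_def)
      also have "\<dots> \<le> ln Rb - L"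
      proof -
        have "ln (R t) \<le> ln Rb" using elim Rpos[of t] Rbp by simp
        thus ?thesis using elim by linarith
      qed
      also have "\<dots> < ln e" by (simp add: L_def)
      finally show ?case using xp ep by simp
    qed
  qed
  show ?thesis
    using lim rp ev_r unfolding R_def E_def \<theta>_def J_def by blast
qed

lemma all_die: "p < n \<Longrightarrow> \<forall>k\<in>{1..p}. ((\<lambda>t. x t k) \<longlongrightarrow> 0) at_top"
proof (induction p)
  case 0 thus ?case by simp
next
  case (Suc p)
  hence IH: "\<forall>k\<in>{1..p}. ((\<lambda>t. x t k) \<longlongrightarrow> 0) at_top" by simp
  have "\<forall>k\<in>{1..<Suc p}. ((\<lambda>t. x t k) \<longlongrightarrow> 0) at_top" using IH by (simp add: atLeastLessThanSuc_atLeastAtMost)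
  hence "((\<lambda>t. x t (Suc p)) \<longlongrightarrow> 0) at_top" using step[of "Suc p"] Suc.prems by auto
  thus ?case using IH by (auto simp: le_Suc_eq)
qed

lemma top_lim: "((\<lambda>t. x t n) \<longlongrightarrow> 1 / a n n) at_top"
proof -
  have nn: "n \<in> {1..n}" using n2 by auto
  have ann: "a n n > 0" and bn: "b n > 0" using adiag bpos nn by auto
  define xs where "xs = 1 / a n n"
  have xsp: "xs > 0" using ann by (simp add: xs_def)
  have die: "\<forall>k\<in>{1..n-1}. ((\<lambda>t. x t k) \<longlongrightarrow> 0) at_top" using all_die[of "n-1"] n2 by simp
  have die': "\<forall>k\<in>{1..<n-1}. ((\<lambda>t. x t k) \<longlongrightarrow> 0) at_top" using die by auto
  obtain r where rp: "r > 0" and evr: "eventually (\<lambda>t. (\<Sum>j\<in>{n-1<..n}. exp (b (n-1) / b j * ln (x t j))) \<ge> r) at_top"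
  proof -
    have "1 \<le> n-1" "n-1 < n" using n2 by auto
    from step[OF this die'] show ?thesis using that by blast
  qed
  have Jn: "{n-1<..n} = {n}" using n2 by auto
  define \<theta> where "\<theta> = b (n-1) / b n"
  have \<theta>p: "\<theta> > 0" using bpos n2 bn by (simp add: \<theta>_def)
  define m where "m = exp (ln r / \<theta>)"
  have mp: "m > 0" by (simp add: m_def)
  have evm: "eventually (\<lambda>t. x t n \<ge> m) at_top"
    using evr eventually_ge_at_top[of 0]
  proof eventually_elim
    case (elim t)
    have xp: "x t n > 0" using pos elim nn by auto
    have "exp (\<theta> * ln (x t n)) \<ge> r" using elim Jn by (simp add: \<theta>_def)
    hence "\<theta> * ln (x t n) \<ge> ln r" using rp by (metis exp_le_cancel_iff exp_ln)
    hence "ln (x t n) \<ge> ln r / \<theta>" using \<theta>p by (simp add: divide_le_eq mult.commute)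
    hence "exp (ln r / \<theta>) \<le> exp (ln (x t n))" by simp
    thus ?case using xp by (simp add: m_def)
  qed
  define e where "e = (\<lambda>t. \<Sum>k\<in>{1..<n}. a n k * x t k)"
  have e0: "(e \<longlongrightarrow> 0) at_top"
  proof -
    have "((\<lambda>t. \<Sum>k\<in>{1..<n}. a n k * x t k) \<longlongrightarrow> (\<Sum>k\<in>{1..<n}. a n k * 0)) at_top"
      using die by (intro tendsto_sum tendsto_mult tendsto_const) auto
    thus ?thesis by (simp add: e_def)
  qed
  have aeq: "\<And>t. alpha n a n (x t) = e t + a n n * x t n"
  proof -
    fix t
    have "alpha n a n (x t) = (\<Sum>k\<in>{1..<n}. a n k * x t k) + a n n * x t n + (\<Sum>k\<in>{n<..n}. a n k * x t k)"
      unfolding alpha_def using n2 by (intro split_sum) auto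
    thus "alpha n a n (x t) = e t + a n n * x t n" by (simp add: e_def)
  qed
  have ev1: "eventually (\<lambda>t. (1::real) \<le> t) at_top" by (rule eventually_ge_at_top)
  have upper: "\<And>\<eta>. \<eta> > 0 \<Longrightarrow> eventually (\<lambda>t. x t n \<le> xs + \<eta>) at_top"
  proof -
    fix \<eta> :: real assume \<eta>: "\<eta> > 0"
    show "eventually (\<lambda>t. x t n \<le> xs + \<eta>) at_top"
    proof (rule eventually_le_of_deriv[where f' = "\<lambda>t. b n * x t n * (1 - alpha n a n (x t))"
          and \<kappa> = "b n * (xs + \<eta>) * (a n n * \<eta>)"])
      show "eventually (\<lambda>t. ((\<lambda>t. x t n) has_real_derivative b n * x t n * (1 - alpha n a n (x t))) (at t)) at_top"
        using ev1 by eventually_elim (rule deriv, use nn in auto)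
      show "0 < b n * (xs + \<eta>) * (a n n * \<eta>)" using bn xsp \<eta> ann by simp
      show "eventually (\<lambda>t. xs + \<eta> \<le> x t n \<longrightarrow> b n * x t n * (1 - alpha n a n (x t)) \<le> - (b n * (xs + \<eta>) * (a n n * \<eta>))) at_top"
        using ev1
      proof eventually_elim
        case (elim t)
        show ?case
        proof
          assume h: "xs + \<eta> \<le> x t n"
          have "alpha n a n (x t) \<ge> a n n * x t n" using alpha_ge elim nn by auto
          moreover have "a n n * x t n \<ge> a n n * (xs + \<eta>)" using h ann by simp
          moreover have "a n n * (xs + \<eta>) = 1 + a n n * \<eta>" using ann by (simp add: xs_def algebra_simps)
          ultimately have h1: "1 - alpha n a n (x t) \<le> - (a n n * \<eta>)" by linarith
          have xp: "x t n > 0" using pos elim nn by auto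
          have "b n * x t n * (1 - alpha n a n (x t)) \<le> b n * x t n * (- (a n n * \<eta>))"
            using h1 bn xp by (intro mult_left_mono) auto
          also have "\<dots> \<le> b n * (xs + \<eta>) * (- (a n n * \<eta>))"
            using h bn ann \<eta> by (intro mult_right_mono_neg mult_left_mono) auto
          finally show "b n * x t n * (1 - alpha n a n (x t)) \<le> - (b n * (xs + \<eta>) * (a n n * \<eta>))" by simp
        qed
      qed
    qed
  qed
  have lower: "\<And>\<eta>. \<eta> > 0 \<Longrightarrow> eventually (\<lambda>t. - x t n \<le> - (xs - \<eta>)) at_top"
  proof -
    fix \<eta> :: real assume \<eta>: "\<eta> > 0"
    have eve: "eventually (\<lambda>t. e t < a n n * \<eta> / 2) at_top"
      using order_tendstoD(2)[OF e0, of "a n n * \<eta> / 2"] ann \<eta> by simp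
    show "eventually (\<lambda>t. - x t n \<le> - (xs - \<eta>)) at_top"
    proof (rule eventually_le_of_deriv[where f' = "\<lambda>t. - (b n * x t n * (1 - alpha n a n (x t)))"
          and \<kappa> = "b n * m * (a n n * \<eta> / 2)"])
      show "eventually (\<lambda>t. ((\<lambda>t. - x t n) has_real_derivative - (b n * x t n * (1 - alpha n a n (x t)))) (at t)) at_top"
        using ev1 by eventually_elim (rule DERIV_minus, rule deriv, use nn in auto)
      show "0 < b n * m * (a n n * \<eta> / 2)" using bn mp \<eta> ann by simp
      show "eventually (\<lambda>t. - (xs - \<eta>) \<le> - x t n \<longrightarrow> - (b n * x t n * (1 - alpha n a n (x t))) \<le> - (b n * m * (a n n * \<eta> / 2))) at_top"
        using ev1 eve evm
      proof eventually_elim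
        case (elim t)
        show ?case
        proof
          assume h: "- (xs - \<eta>) \<le> - x t n"
          have "a n n * x t n \<le> a n n * (xs - \<eta>)" using h ann by simp
          moreover have "a n n * (xs - \<eta>) = 1 - a n n * \<eta>" using ann by (simp add: xs_def algebra_simps)
          ultimately have h1: "1 - alpha n a n (x t) \<ge> a n n * \<eta> / 2" using aeq[of t] elim by linarith
          have "b n * m * (a n n * \<eta> / 2) \<le> b n * x t n * (a n n * \<eta> / 2)"
            using elim bn ann \<eta> by (intro mult_right_mono mult_left_mono) auto
          also have "\<dots> \<le> b n * x t n * (1 - alpha n a n (x t))"
            using h1 bn mp elim by (intro mult_left_mono) auto
          finally show "- (b n * x t n * (1 - alpha n a n (x t))) \<le> - (b n * m * (a n n * \<eta> / 2))" by simp
        qed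
      qed
    qed
  qed
  show ?thesis unfolding xs_def[symmetric]
  proof (rule order_tendstoI)
    fix c assume c: "c < xs"
    have "(xs - c)/2 > 0" using c by simp
    from lower[OF this] show "eventually (\<lambda>t. c < x t n) at_top"
      by eventually_elim (use c in \<open>auto simp: field_simps\<close>)
  next
    fix c assume c: "xs < c"
    have "(c - xs)/2 > 0" using c by simp
    from upper[OF this] show "eventually (\<lambda>t. x t n < c) at_top"
      by eventually_elim (use c in \<open>auto simp: field_simps\<close>)
  qed
qed

end

theorem corollary2p13:
  fixes n :: nat and b :: "nat \<Rightarrow> real" and a :: "nat \<Rightarrow> nat \<Rightarrow> real"
  assumes n2: "n \<ge> 2"
    and bpos: "\<forall>i\<in>{1..n}. b i > 0"
    and adiag: "\<forall>i\<in>{1..n}. a i i > 0"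
    and anonneg: "\<forall>i\<in>{1..n}. \<forall>j\<in>{1..n}. a i j \<ge> 0"
    and hyp: "\<forall>l\<in>{1..n-1}. \<forall>j\<in>{1..n} - {1..l}.
               alpha n a j (Yax a l) < 1 \<and>
               (\<forall>y\<in>nonneg_orthant n. alpha n a l y = 1 \<and> (\<forall>i\<in>{1..<l}. y i = 0)
                   \<longrightarrow> alpha n a j y \<le> 1)"
  shows "global_attractor n b a (Yax a n)"
proof -
  have H1: "\<And>l j. l \<in> {1..n-1} \<Longrightarrow> j \<in> {l<..n} \<Longrightarrow> a j l < a l l"
    using hyp_H1[OF adiag hyp] by blast
  have H2: "\<And>l j k. l \<in> {1..n-1} \<Longrightarrow> j \<in> {l<..n} \<Longrightarrow> k \<in> {l..n} \<Longrightarrow> a j k \<le> a l k"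
    using hyp_H2[OF adiag anonneg hyp] by blast
  have nn: "n \<in> {1..n}" using n2 by auto
  have "Yax a n \<in> nonneg_orthant n"
    using adiag nn by (auto simp: Yax_def nonneg_orthant_def less_imp_le)
  moreover have "\<forall>x. LV_solution n b a x \<and> x 0 \<in> pos_orthant n \<longrightarrow>
        (\<forall>i\<in>{1..n}. ((\<lambda>t. x t i) \<longlongrightarrow> Yax a n i) at_top)"
  proof (intro allI impI ballI)
    fix x i assume xs: "LV_solution n b a x \<and> x 0 \<in> pos_orthant n" and i: "i \<in> {1..n}"
    interpret LVsys n b a x
      using n2 bpos adiag anonneg H1 H2 xs by unfold_locales auto
    show "((\<lambda>t. x t i) \<longlongrightarrow> Yax a n i) at_top"
    proof (cases "i = n")
      case True thus ?thesis using top_lim by (simp add: Yax_def)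
    next
      case False
      hence "i \<in> {1..n-1}" using i by auto
      hence "((\<lambda>t. x t i) \<longlongrightarrow> 0) at_top" using all_die[of "n-1"] n2 by auto
      thus ?thesis using False by (simp add: Yax_def)
    qed
  qed
  ultimately show ?thesis unfolding global_attractor_def by blast
qed

end
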